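(* In the relaxed greedy algorithm described in the context, fix a phase $i\ge1$. For every inter-cluster edge $\{a,b\}$ of the cluster graph $H_{i-1}$, we have ${\tt sp}_{G'_{i-1}}(a,b)\le(2\delta+1)W_{i-1}$.
   Context: Setting. Let $G=(V,E)$ be an $n$-node $d$-dimensional $\alpha$-quasi unit ball graph ($0<\alpha\le1$): its vertices are points of $\mathbb{R}^d$, $|uv|$ is Euclidean distance, $|uv|\le\alpha$ implies $\{u,v\}\in E$, and $|uv|>1$ implies $\{u,v\}\notin E$. Edge weights are Euclidean lengths. ${\tt sp}_J(x,y)$ denotes shortest-path length in a graph $J$. Parameters: $r>1$ and $0<\delta<1$. Set $W_i=r^i\alpha/n$. $G'_{i-1}$ is any spanning subgraph of $G$; in the algorithm it is the partial spanner at the end of phase $i-1$. Cluster cover of $G'_{i-1}$ of radius $\delta W_{i-1}$: a set of centers $a$ with clusters $C_a$ partitioning $V$, such that - ${\tt sp}_{G'_{i-1}}(a,x)\le\delta W_{i-1}$ for $x\in C_a$; - ${\tt sp}_{G'_{i-1}}(a,b)>\delta W_{i-1}$ for distinct centers $a,b$. Cluster graph $H_{i-1}$: its vertex set is $V$ and it has two kinds of edges. - Intra-cluster edges: $\{a,x\}$ for each center $a$ and each $x\in C_a$. - Inter-cluster edges: $\{a,b\}$ for centers $a\ne b$ such that either ${\tt sp}_{G'_{i-1}}(a,b)\le W_{i-1}$, or some edge of $G'_{i-1}$ has one endpoint in $C_a$ and the other in $C_b$. Each edge $\{p,q\}$ of $H_{i-1}$ has weight ${\tt sp}_{G'_{i-1}}(p,q)$.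 *)

theory Defs
  imports "HOL-Analysis.Analysis"
begin

definition quasi_unit_ball_graph :: "real \<Rightarrow> 'a::euclidean_space set \<Rightarrow> 'a set set \<Rightarrow> bool" where
  "quasi_unit_ball_graph \<alpha> V E \<longleftrightarrow>
     finite V \<and> 0 < \<alpha> \<and> \<alpha> \<le> 1 \<and>
     E \<subseteq> {{u, v} | u v. u \<in> V \<and> v \<in> V \<and> u \<noteq> v} \<and>
     (\<forall>u\<in>V. \<forall>v\<in>V. u \<noteq> v \<and> dist u v \<le> \<alpha> \<longrightarrow> {u, v} \<in> E) \<and>
     (\<forall>u v. {u, v} \<in> E \<longrightarrow> dist u v \<le> 1)"

definition is_walk :: "'a set set \<Rightarrow> 'a list \<Rightarrow> bool" where
  "is_walk E p \<longleftrightarrow> p \<noteq> [] \<and> (\<forall>i. Suc i < length p \<longrightarrow> {p ! i, p ! Suc i} \<in> E)"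

definition walk_length :: "'a::metric_space list \<Rightarrow> real" where
  "walk_length p = (\<Sum>i<length p - 1. dist (p ! i) (p ! Suc i))"

text \<open>Shortest-path length w.r.t. Euclidean edge weights (infinity if no path).\<close>
definition sp :: "'a::metric_space set set \<Rightarrow> 'a \<Rightarrow> 'a \<Rightarrow> ereal" where
  "sp E x y = (INF p \<in> {p. is_walk E p \<and> hd p = x \<and> last p = y}. ereal (walk_length p))"

definition W :: "real \<Rightarrow> real \<Rightarrow> nat \<Rightarrow> nat \<Rightarrow> real" where
  "W r \<alpha> n i = r ^ i * \<alpha> / real n"

definition cluster_cover :: "'a::metric_space set \<Rightarrow> 'a set set \<Rightarrow> real \<Rightarrow> 'a set \<Rightarrow> ('a \<Rightarrow> 'a set) \<Rightarrow> bool" where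
  "cluster_cover V E' \<rho> A C \<longleftrightarrow>
     A \<subseteq> V \<and>
     (\<forall>a\<in>A. C a \<noteq> {} \<and> C a \<subseteq> V) \<and>
     (\<Union>a\<in>A. C a) = V \<and>
     (\<forall>a\<in>A. \<forall>b\<in>A. a \<noteq> b \<longrightarrow> C a \<inter> C b = {}) \<and>
     (\<forall>a\<in>A. \<forall>x\<in>C a. sp E' a x \<le> ereal \<rho>) \<and>
     (\<forall>a\<in>A. \<forall>b\<in>A. a \<noteq> b \<longrightarrow> sp E' a b > ereal \<rho>)"

definition inter_cluster_edge :: "'a::metric_space set set \<Rightarrow> real \<Rightarrow> 'a set \<Rightarrow> ('a \<Rightarrow> 'a set) \<Rightarrow> 'a \<Rightarrow> 'a \<Rightarrow> bool" where
  "inter_cluster_edge E' Wp A C a b \<longleftrightarrow>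
     a \<in> A \<and> b \<in> A \<and> a \<noteq> b \<and>
     (sp E' a b \<le> ereal Wp \<or> (\<exists>x\<in>C a. \<exists>y\<in>C b. {x, y} \<in> E'))"

end

theory Submission
  imports Defs
begin

lemma wl_single[simp]: "walk_length [x] = 0"
  by (simp add: walk_length_def)

lemma wl_cons2[simp]: "walk_length (x#y#p) = dist x y + walk_length (y#p)"
  unfolding walk_length_def
  by (simp add: sum.lessThan_Suc_shift del: sum.lessThan_Suc)

lemma walk_single[simp]: "is_walk E [x]"
  by (simp add: is_walk_def)

lemma walk_cons2[simp]: "is_walk E (x#y#p) \<longleftrightarrow> {x,y} \<in> E \<and> is_walk E (y#p)"
  unfolding is_walk_def
  by (auto simp: less_Suc_eq_0_disj)

lemma walk_app:
  "p \<noteq> [] \<Longrightarrow> q \<noteq> [] \<Longrightarrow> is_walk E p \<Longrightarrow> is_walk E q \<Longrightarrow> last p = hd q \<Longrightarrow>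
   is_walk E (p @ tl q) \<and> walk_length (p @ tl q) = walk_length p + walk_length q
   \<and> hd (p @ tl q) = hd p \<and> last (p @ tl q) = last q"
proof (induction p)
  case Nil then show ?case by simp
next
  case (Cons x p)
  show ?case
  proof (cases p)
    case Nil
    then show ?thesis using Cons.prems by (cases q) (auto simp: last_tl)
  next
    case (Cons y p')
    have "is_walk E p" using Cons.prems Cons by simp
    then have IH: "is_walk E (p @ tl q) \<and> walk_length (p @ tl q) = walk_length p + walk_length q
   \<and> hd (p @ tl q) = hd p \<and> last (p @ tl q) = last q"
      using Cons.IH Cons.prems Cons by simp
    then show ?thesis using Cons.prems Cons by simp
  qed
qed

lemma walk_rev:
  "p \<noteq> [] \<Longrightarrow> is_walk E p \<Longrightarrow> is_walk E (rev p) \<and> walk_length (rev p) = walk_length p"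
proof (induction p)
  case Nil then show ?case by simp
next
  case (Cons x p)
  show ?case
  proof (cases p)
    case Nil then show ?thesis by simp
  next
    case (Cons y p')
    have w: "is_walk E p" "{x,y} \<in> E" using Cons.prems Cons by auto
    have IH: "is_walk E (rev p) \<and> walk_length (rev p) = walk_length p"
      using Cons.IH w Cons by simp
    have e: "{y,x} \<in> E" using w by (simp add: insert_commute)
    have "is_walk E (rev p @ tl [y,x]) \<and> walk_length (rev p @ tl [y,x]) = walk_length (rev p) + walk_length [y,x]"
      using walk_app[of "rev p" "[y,x]" E] IH e Cons by (simp add: last_rev)
    then show ?thesis using IH Cons w by (simp add: dist_commute)
  qed
qed

lemma sp_le_walk: "is_walk E p \<Longrightarrow> hd p = x \<Longrightarrow> last p = y \<Longrightarrow> sp E x y \<le> ereal (walk_length p)"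
  unfolding sp_def by (rule INF_lower) auto

lemma sp_lt_obtain:
  assumes "sp E x y < ereal c"
  obtains p where "is_walk E p" "hd p = x" "last p = y" "walk_length p < c"
  using assms unfolding sp_def by (auto simp: INF_less_iff)

theorem lemma2p5:
  fixes V :: "'a::euclidean_space set" and E E' :: "'a set set"
    and \<alpha> r \<delta> :: real and i :: nat and A :: "'a set" and C :: "'a \<Rightarrow> 'a set"
    and a b :: 'a
  assumes G: "quasi_unit_ball_graph \<alpha> V E"
    and n: "card V \<ge> 1"
    and r: "r > 1" and \<delta>: "0 < \<delta>" "\<delta> < 1"
    and i: "i \<ge> 1"
    and spanning: "E' \<subseteq> E"
    and phase: "\<forall>u v. {u, v} \<in> E' \<longrightarrow> dist u v \<le> W r \<alpha> (card V) (i - 1)"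
    and cover: "cluster_cover V E' (\<delta> * W r \<alpha> (card V) (i - 1)) A C"
    and edge: "inter_cluster_edge E' (W r \<alpha> (card V) (i - 1)) A C a b"
  shows "sp E' a b \<le> ereal ((2 * \<delta> + 1) * W r \<alpha> (card V) (i - 1))"
proof -
  define w where "w = W r \<alpha> (card V) (i - 1)"
  have apos: "\<alpha> > 0" using G by (simp add: quasi_unit_ball_graph_def)
  have wpos: "w > 0" unfolding w_def W_def using apos r n by simp
  have ab: "a \<in> A" "b \<in> A" using edge by (auto simp: inter_cluster_edge_def)
  show ?thesis
  proof (cases "sp E' a b \<le> ereal w")
    case True
    moreover have "w \<le> (2 * \<delta> + 1) * w" using wpos \<delta> by simp
    then have "ereal w \<le> ereal ((2 * \<delta> + 1) * w)" by (simp only: ereal_less_eq(3))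
    ultimately have "sp E' a b \<le> ereal ((2 * \<delta> + 1) * w)"
      by (rule order_trans)
    then show ?thesis unfolding w_def .
  next
    case False
    then obtain x y where xy: "x \<in> C a" "y \<in> C b" "{x,y} \<in> E'"
      using edge by (auto simp: inter_cluster_edge_def w_def)
    have sx: "sp E' a x \<le> ereal (\<delta> * w)" and sy: "sp E' b y \<le> ereal (\<delta> * w)"
      using cover ab xy unfolding cluster_cover_def w_def by auto
    have dxy: "dist x y \<le> w" using phase xy unfolding w_def by blast
    have eps: "\<forall>e>0. sp E' a b \<le> ereal ((2 * \<delta> + 1) * w) + ereal e"
    proof (intro allI impI)
      fix e :: real assume e: "e > 0"
      have "sp E' a x < ereal (\<delta> * w + e/2)" proof -
        have "ereal (\<delta> * w) < ereal (\<delta> * w + e/2)" using e by simp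
        then show ?thesis using sx by (rule order.strict_trans1[rotated])
      qed
      then obtain p where p: "is_walk E' p" "hd p = a" "last p = x" "walk_length p < \<delta> * w + e/2"
        by (rule sp_lt_obtain)
      have "sp E' b y < ereal (\<delta> * w + e/2)" proof -
        have "ereal (\<delta> * w) < ereal (\<delta> * w + e/2)" using e by simp
        then show ?thesis using sy by (rule order.strict_trans1[rotated])
      qed
      then obtain q where q: "is_walk E' q" "hd q = b" "last q = y" "walk_length q < \<delta> * w + e/2"
        by (rule sp_lt_obtain)
      have pne: "p \<noteq> []" "q \<noteq> []" using p q by (auto simp: is_walk_def)
      have rq: "is_walk E' (rev q) \<and> walk_length (rev q) = walk_length q" using walk_rev pne q by blast
      have xyw: "is_walk E' [x,y]" using xy by simp
      have hq: "hd (rev q) = y" using q pne by (simp add: hd_rev)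
      have lq: "last (rev q) = b" using q pne by (simp add: last_rev)
      have rne: "rev q \<noteq> []" using pne by simp
      define s where "s = [x,y] @ tl (rev q)"
      have s1: "is_walk E' s \<and> walk_length s = walk_length [x,y] + walk_length (rev q)
        \<and> hd s = hd [x,y] \<and> last s = last (rev q)"
        unfolding s_def by (rule walk_app[OF _ rne xyw]) (use rq hq in auto)
      have sne: "s \<noteq> []" unfolding s_def by simp
      have s2: "is_walk E' (p @ tl s) \<and> walk_length (p @ tl s) = walk_length p + walk_length s
        \<and> hd (p @ tl s) = hd p \<and> last (p @ tl s) = last s"
        by (rule walk_app[OF pne(1) sne p(1)]) (use s1 p in auto)
      have "sp E' a b \<le> ereal (walk_length (p @ tl s))"
        by (rule sp_le_walk) (use s2 s1 p lq in auto)
      also have "walk_length (p @ tl s) \<le> (2 * \<delta> + 1) * w + e"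
      proof -
        have "walk_length (p @ tl s) = walk_length p + (dist x y + walk_length q)"
          using s1 s2 rq by simp
        then show ?thesis using p(4) q(4) dxy by (simp add: algebra_simps)
      qed
      finally show "sp E' a b \<le> ereal ((2 * \<delta> + 1) * w) + ereal e" by simp
    qed
    have "sp E' a b \<le> ereal ((2 * \<delta> + 1) * w)"
    proof (rule ereal_le_epsilon2)
      fix e :: real assume "0 < e"
      then show "sp E' a b \<le> ereal ((2 * \<delta> + 1) * w) + ereal e" by (rule eps[rule_format])
    qed
    then show ?thesis unfolding w_def .
  qed
qed

end
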